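(* The algebra $A_k$ is neither left nor right noetherian.
   Context: Let $k$ be a field. $A_k=k\langle x_1,\dots,x_7\rangle/(r_1,\dots,r_7)$, graded by $\deg x_i=1$, with $r_1=[x_2,x_3]+[x_4,x_5]+[x_6,x_7]$, $r_2=[x_3,x_1]+[x_4,x_6]+[x_7,x_5]$, $r_3=[x_1,x_2]+[x_6,x_5]+[x_7,x_4]$, $r_4=[x_5,x_1]+[x_3,x_7]+[x_6,x_2]$, $r_5=[x_1,x_4]+[x_2,x_7]+[x_3,x_6]$, $r_6=[x_7,x_1]+[x_5,x_3]+[x_2,x_4]$, $r_7=[x_1,x_6]+[x_4,x_3]+[x_5,x_2]$. *)

theory Defs
  imports "HOL-Algebra.QuotRing"
begin

datatype gen = X1 | X2 | X3 | X4 | X5 | X6 | X7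

text \<open>Free associative algebra k<x_1,...,x_7>: finitely supported functions
  from words (lists of generators) to k, with concatenation-convolution product.\<close>

definition fa_carrier :: "(gen list \<Rightarrow> 'k::field) set" where
  "fa_carrier = {f. finite {w. f w \<noteq> 0}}"

definition fa_mult :: "(gen list \<Rightarrow> 'k::field) \<Rightarrow> (gen list \<Rightarrow> 'k) \<Rightarrow> gen list \<Rightarrow> 'k" where
  "fa_mult f g = (\<lambda>w. \<Sum>i\<le>length w. f (take i w) * g (drop i w))"

definition free_alg :: "(gen list \<Rightarrow> 'k::field) ring" where
  "free_alg = \<lparr>carrier = fa_carrier, mult = fa_mult,
               one = (\<lambda>w. if w = [] then 1 else 0),
               zero = (\<lambda>w. 0), add = (\<lambda>f g w. f w + g w)\<rparr>"

definition gx :: "gen \<Rightarrow> gen list \<Rightarrow> 'k::field" where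
  "gx a = (\<lambda>w. if w = [a] then 1 else 0)"

definition comm :: "gen \<Rightarrow> gen \<Rightarrow> gen list \<Rightarrow> 'k::field" where
  "comm a b = (\<lambda>w. fa_mult (gx a) (gx b) w - fa_mult (gx b) (gx a) w)"

definition csum3 :: "(gen list \<Rightarrow> 'k::field) \<Rightarrow> (gen list \<Rightarrow> 'k) \<Rightarrow> (gen list \<Rightarrow> 'k) \<Rightarrow> gen list \<Rightarrow> 'k" where
  "csum3 f g h = (\<lambda>w. f w + g w + h w)"

definition relations :: "(gen list \<Rightarrow> 'k::field) set" where
  "relations = {
     csum3 (comm X2 X3) (comm X4 X5) (comm X6 X7),
     csum3 (comm X3 X1) (comm X4 X6) (comm X7 X5),
     csum3 (comm X1 X2) (comm X6 X5) (comm X7 X4),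
     csum3 (comm X5 X1) (comm X3 X7) (comm X6 X2),
     csum3 (comm X1 X4) (comm X2 X7) (comm X3 X6),
     csum3 (comm X7 X1) (comm X5 X3) (comm X2 X4),
     csum3 (comm X1 X6) (comm X4 X3) (comm X5 X2)}"

definition A_alg :: "(gen list \<Rightarrow> 'k::field) set ring" where
  "A_alg = free_alg Quot (genideal free_alg relations)"

definition left_ideal :: "'a set \<Rightarrow> ('a, 'b) ring_scheme \<Rightarrow> bool" where
  "left_ideal J R \<longleftrightarrow> additive_subgroup J R \<and>
     (\<forall>a\<in>carrier R. \<forall>x\<in>J. a \<otimes>\<^bsub>R\<^esub> x \<in> J)"

definition right_ideal :: "'a set \<Rightarrow> ('a, 'b) ring_scheme \<Rightarrow> bool" where
  "right_ideal J R \<longleftrightarrow> additive_subgroup J R \<and>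
     (\<forall>a\<in>carrier R. \<forall>x\<in>J. x \<otimes>\<^bsub>R\<^esub> a \<in> J)"

definition left_noetherian :: "('a, 'b) ring_scheme \<Rightarrow> bool" where
  "left_noetherian R \<longleftrightarrow> (\<forall>J :: nat \<Rightarrow> 'a set.
     (\<forall>n. left_ideal (J n) R \<and> J n \<subseteq> J (Suc n)) \<longrightarrow> (\<exists>N. \<forall>n\<ge>N. J n = J N))"

definition right_noetherian :: "('a, 'b) ring_scheme \<Rightarrow> bool" where
  "right_noetherian R \<longleftrightarrow> (\<forall>J :: nat \<Rightarrow> 'a set.
     (\<forall>n. right_ideal (J n) R \<and> J n \<subseteq> J (Suc n)) \<longrightarrow> (\<exists>N. \<forall>n\<ge>N. J n = J N))"

end

theory Submission
  imports Defs "HOL-Computational_Algebra.Polynomial"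
begin


lemma fa_carrier_iff: "f \<in> fa_carrier \<longleftrightarrow> finite {w. f w \<noteq> 0}"
  by (simp add: fa_carrier_def)

lemma fa_mult_supp:
  "{w. fa_mult f g w \<noteq> 0} \<subseteq> (\<lambda>(u,v). u @ v) ` ({w. f w \<noteq> 0} \<times> {w. g w \<noteq> 0})"
proof
  fix w assume "w \<in> {w. fa_mult f g w \<noteq> 0}"
  then have "(\<Sum>i\<le>length w. f (take i w) * g (drop i w)) \<noteq> 0" by (simp add: fa_mult_def)
  then obtain i where "f (take i w) * g (drop i w) \<noteq> 0"
    by (meson sum.neutral)
  then show "w \<in> (\<lambda>(u,v). u @ v) ` ({w. f w \<noteq> 0} \<times> {w. g w \<noteq> 0})"
    by (auto intro!: image_eqI[where x="(take i w, drop i w)"])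
qed

lemma fa_mult_closed: "f \<in> fa_carrier \<Longrightarrow> g \<in> fa_carrier \<Longrightarrow> fa_mult f g \<in> fa_carrier"
  unfolding fa_carrier_iff
  by (rule finite_subset[OF fa_mult_supp]) auto

lemma fa_mult_assoc: "fa_mult (fa_mult f g) h = fa_mult f (fa_mult g h)"
proof
  fix w :: "gen list"
  define n where "n = length w"
  define F where "F j i = f (take j w) * g (take (i - j) (drop j w)) * h (drop i w)" for j i
  have L: "fa_mult (fa_mult f g) h w = (\<Sum>i\<le>n. \<Sum>j\<in>{j\<in>{..n}. j \<le> i}. F j i)"
    unfolding fa_mult_def n_def
  proof (rule sum.cong[OF refl])
    fix i assume i: "i \<in> {..length w}"
    have e: "{j\<in>{..length w}. j \<le> i} = {..i}" using i by auto
    show "(\<Sum>ia\<le>length (take i w). f (take ia (take i w)) * g (drop ia (take i w))) * h (drop i w) =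
          (\<Sum>j\<in>{j\<in>{..length w}. j \<le> i}. F j i)"
      unfolding e F_def using i
      by (auto simp add: sum_distrib_right min_def take_take drop_take intro!: sum.cong)
  qed
  have R: "fa_mult f (fa_mult g h) w = (\<Sum>j\<le>n. \<Sum>i\<in>{i\<in>{..n}. j \<le> i}. F j i)"
    unfolding fa_mult_def n_def
  proof (rule sum.cong[OF refl])
    fix j assume j: "j \<in> {..length w}"
    have "(\<Sum>l\<le>length (drop j w). g (take l (drop j w)) * h (drop l (drop j w)))
        = (\<Sum>l\<le>length w - j. g (take ((l + j) - j) (drop j w)) * h (drop (l + j) w))"
      by (simp add: add.commute)
    also have "\<dots> = (\<Sum>i\<in>(\<lambda>l. l + j) ` {..length w - j}. g (take (i - j) (drop j w)) * h (drop i w))"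
      by (subst sum.reindex) (auto simp: inj_on_def)
    also have "(\<lambda>l. l + j) ` {..length w - j} = {i\<in>{..length w}. j \<le> i}"
      using j apply (auto simp: image_iff)
      subgoal for x by (rule bexI[of _ "x - j"]) auto
      done
    finally show "f (take j w) * (\<Sum>l\<le>length (drop j w). g (take l (drop j w)) * h (drop l (drop j w))) =
         (\<Sum>i\<in>{i\<in>{..length w}. j \<le> i}. F j i)"
      by (simp add: F_def sum_distrib_left mult.assoc)
  qed
  show "fa_mult (fa_mult f g) h w = fa_mult f (fa_mult g h) w"
    unfolding L R by (rule sum.swap_restrict) auto
qed


lemma fa_mult_one_left: "fa_mult (\<lambda>w. if w = [] then 1 else 0) f = f"
proof
  fix w :: "gen list"
  have "fa_mult (\<lambda>w. if w = [] then 1 else 0) f w = (\<Sum>i\<le>length w. if i = 0 then f w else 0)"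
    unfolding fa_mult_def by (rule sum.cong) auto
  then show "fa_mult (\<lambda>w. if w = [] then 1 else 0) f w = f w" by simp
qed

lemma fa_mult_one_right: "fa_mult f (\<lambda>w. if w = [] then 1 else 0) = f"
proof
  fix w :: "gen list"
  have "fa_mult f (\<lambda>w. if w = [] then 1 else 0) w = (\<Sum>i\<le>length w. if i = length w then f w else 0)"
    unfolding fa_mult_def by (rule sum.cong) auto
  then show "fa_mult f (\<lambda>w. if w = [] then 1 else 0) w = f w" by simp
qed

lemma fa_distr_l: "fa_mult (\<lambda>w. f w + g w) h = (\<lambda>w. fa_mult f h w + fa_mult g h w)"
  unfolding fa_mult_def by (auto simp: algebra_simps sum.distrib)

lemma fa_distr_r: "fa_mult h (\<lambda>w. f w + g w) = (\<lambda>w. fa_mult h f w + fa_mult h g w)"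
  unfolding fa_mult_def by (auto simp: algebra_simps sum.distrib)

lemma fa_add_closed: "f \<in> fa_carrier \<Longrightarrow> g \<in> fa_carrier \<Longrightarrow> (\<lambda>w. f w + g w) \<in> fa_carrier"
  unfolding fa_carrier_iff
  by (rule finite_subset[of _ "{w. f w \<noteq> 0} \<union> {w. g w \<noteq> 0}"]) auto

lemma ring_free_alg: "ring (free_alg :: (gen list \<Rightarrow> 'k::field) ring)"
proof (rule ringI)
  show "abelian_group (free_alg :: (gen list \<Rightarrow> 'k::field) ring)"
  proof (rule abelian_groupI)
    fix x :: "gen list \<Rightarrow> 'k" assume x: "x \<in> carrier free_alg"
    show "\<exists>y\<in>carrier free_alg. y \<oplus>\<^bsub>free_alg\<^esub> x = \<zero>\<^bsub>free_alg\<^esub>"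
      using x by (auto simp: free_alg_def fa_carrier_iff intro!: bexI[of _ "\<lambda>w. - x w"])
  qed (auto simp: free_alg_def fa_carrier_iff fa_add_closed[unfolded fa_carrier_iff] algebra_simps)
  show "monoid (free_alg :: (gen list \<Rightarrow> 'k::field) ring)"
  proof (rule monoidI)
    show "\<one>\<^bsub>free_alg\<^esub> \<in> carrier (free_alg :: (gen list \<Rightarrow> 'k::field) ring)"
      by (auto simp: free_alg_def fa_carrier_iff)
  qed (auto simp: free_alg_def fa_mult_closed fa_mult_assoc fa_mult_one_left fa_mult_one_right)
qed (auto simp: free_alg_def fa_distr_l fa_distr_r)



datatype 'a gauss = Gs (re: 'a) (im: 'a)

instantiation gauss :: (comm_ring_1) comm_ring_1
begin
definition "0 = Gs 0 0"
definition "1 = Gs 1 0"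
definition "x + y = Gs (re x + re y) (im x + im y)"
definition "x - y = Gs (re x - re y) (im x - im y)"
definition "- x = Gs (- re x) (- im x)"
definition "x * y = Gs (re x * re y - im x * im y) (re x * im y + im x * re y)"
instance
  by intro_classes
    (auto intro!: gauss.expand simp: zero_gauss_def one_gauss_def plus_gauss_def minus_gauss_def
       uminus_gauss_def times_gauss_def algebra_simps)
end

lemma gauss_simps [simp]:
  "re 0 = 0" "im 0 = 0" "re 1 = 1" "im 1 = 0"
  "re (x + y) = re x + re y" "im (x + y) = im x + im y"
  "re (x - y) = re x - re y" "im (x - y) = im x - im y"
  "re (- x) = - re x" "im (- x) = - im x"
  "re (x * y) = re x * re y - im x * im y" "im (x * y) = re x * im y + im x * re y"
  by (simp_all add: zero_gauss_def one_gauss_def plus_gauss_def minus_gauss_def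
       uminus_gauss_def times_gauss_def)

lemma gauss_eq_iff: "x = y \<longleftrightarrow> re x = re y \<and> im x = im y"
  by (auto intro: gauss.expand)



definition sc :: "'k::field \<Rightarrow> 'k poly gauss" where "sc c = Gs [:c:] 0"

lemma sc_simps [simp]: "sc 0 = 0" "sc 1 = 1" "sc (a + b) = sc a + sc b" "sc (a * b) = sc a * sc b"
  "sc (- a) = - sc a" "sc (a - b) = sc a - sc b"
  by (simp_all add: sc_def gauss_eq_iff)

lemma sc_sum: "sc (sum f A) = (\<Sum>x\<in>A. sc (f x))"
  by (induction A rule: infinite_finite_induct) auto

definition lin :: "(gen list \<Rightarrow> 'k poly gauss) \<Rightarrow> (gen list \<Rightarrow> 'k::field) \<Rightarrow> 'k poly gauss" where
  "lin H f = (\<Sum>w\<in>{w. f w \<noteq> 0}. sc (f w) * H w)"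

lemma lin_superset:
  assumes "finite A" "{w. f w \<noteq> 0} \<subseteq> A"
  shows "lin H f = (\<Sum>w\<in>A. sc (f w) * H w)"
  unfolding lin_def by (rule sum.mono_neutral_left) (use assms in auto)

lemma lin_add:
  assumes "f \<in> fa_carrier" "g \<in> fa_carrier"
  shows "lin H (\<lambda>w. f w + g w) = lin H f + lin H g"
proof -
  let ?A = "{w. f w \<noteq> 0} \<union> {w. g w \<noteq> 0}"
  have fin: "finite ?A" using assms by (simp add: fa_carrier_iff)
  have "lin H (\<lambda>w. f w + g w) = (\<Sum>w\<in>?A. sc (f w + g w) * H w)"
    by (rule lin_superset[OF fin]) auto
  also have "\<dots> = (\<Sum>w\<in>?A. sc (f w) * H w) + (\<Sum>w\<in>?A. sc (g w) * H w)"
    by (simp add: algebra_simps sum.distrib)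
  also have "\<dots> = lin H f + lin H g"
    by (simp add: lin_superset[OF fin])
  finally show ?thesis .
qed

lemma lin_neg: "lin H (\<lambda>w. - f w) = - lin H f"
  unfolding lin_def by (simp add: sum_negf)

lemma lin_diff:
  assumes "f \<in> fa_carrier" "g \<in> fa_carrier"
  shows "lin H (\<lambda>w. f w - g w) = lin H f - lin H g"
proof -
  have g': "(\<lambda>w. - g w) \<in> fa_carrier" using assms by (simp add: fa_carrier_iff)
  have "lin H (\<lambda>w. f w - g w) = lin H (\<lambda>w. f w + (- g w))" by simp
  also have "\<dots> = lin H f - lin H g" using lin_add[OF assms(1) g'] lin_neg[of H g] by simp
  finally show ?thesis .
qed

lemma lin_zero [simp]: "lin H (\<lambda>w. 0) = 0"
  unfolding lin_def by simp

lemma conv_sum: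
  fixes F :: "gen list \<Rightarrow> gen list \<Rightarrow> 'r::comm_monoid_add"
  assumes A: "finite A" and B: "finite B"
    and F0: "\<And>u v. u \<notin> A \<or> v \<notin> B \<Longrightarrow> F u v = 0"
  shows "(\<Sum>w\<in>(\<lambda>(u,v). u @ v) ` (A \<times> B). \<Sum>i\<le>length w. F (take i w) (drop i w))
       = (\<Sum>u\<in>A. \<Sum>v\<in>B. F u v)"
proof -
  let ?C = "(\<lambda>(u,v). u @ v) ` (A \<times> B)"
  let ?S = "Sigma ?C (\<lambda>w. {..length w})"
  let ?D = "(\<lambda>(u,v). (u @ v, length u)) ` (A \<times> B)"
  have "(\<Sum>w\<in>?C. \<Sum>i\<le>length w. F (take i w) (drop i w)) = (\<Sum>(w,i)\<in>?S. F (take i w) (drop i w))"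
    by (rule sum.Sigma) (use A B in auto)
  also have "\<dots> = (\<Sum>(w,i)\<in>?D. F (take i w) (drop i w))"
  proof (rule sum.mono_neutral_right)
    show "finite ?S" using A B by auto
    show "?D \<subseteq> ?S" by auto
    show "\<forall>x\<in>?S - ?D. (case x of (w, i) \<Rightarrow> F (take i w) (drop i w)) = 0"
    proof
      fix x assume x: "x \<in> ?S - ?D"
      obtain w i where xw: "x = (w, i)" by (cases x)
      have "\<not> (take i w \<in> A \<and> drop i w \<in> B)"
      proof
        assume h: "take i w \<in> A \<and> drop i w \<in> B"
        have "i \<le> length w" using x xw by auto
        then have "x = (\<lambda>(u,v). (u @ v, length u)) (take i w, drop i w)" using xw by auto
        then show False using x h by blast
      qed
      then show "(case x of (w, i) \<Rightarrow> F (take i w) (drop i w)) = 0" using xw F0 by auto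
    qed
  qed
  also have "\<dots> = (\<Sum>(u,v)\<in>A \<times> B. F u v)"
    by (subst sum.reindex) (auto simp: inj_on_def intro!: sum.cong)
  also have "\<dots> = (\<Sum>u\<in>A. \<Sum>v\<in>B. F u v)"
    by (rule sum.cartesian_product[symmetric])
  finally show ?thesis .
qed

lemma lin_mult:
  assumes f: "f \<in> fa_carrier" and g: "g \<in> fa_carrier"
  shows "lin H (fa_mult f g) = (\<Sum>u\<in>{w. f w \<noteq> 0}. \<Sum>v\<in>{w. g w \<noteq> 0}. sc (f u) * sc (g v) * H (u @ v))"
proof -
  let ?A = "{w. f w \<noteq> 0}" and ?B = "{w. g w \<noteq> 0}"
  have A: "finite ?A" and B: "finite ?B" using f g by (auto simp: fa_carrier_iff)
  let ?C = "(\<lambda>(u,v). u @ v) ` (?A \<times> ?B)"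
  have "lin H (fa_mult f g) = (\<Sum>w\<in>?C. sc (fa_mult f g w) * H w)"
    by (rule lin_superset) (use A B fa_mult_supp in auto)
  also have "\<dots> = (\<Sum>w\<in>?C. \<Sum>i\<le>length w. sc (f (take i w)) * sc (g (drop i w)) * H (take i w @ drop i w))"
    by (simp add: fa_mult_def sc_sum sum_distrib_right)
  also have "\<dots> = (\<Sum>u\<in>?A. \<Sum>v\<in>?B. sc (f u) * sc (g v) * H (u @ v))"
    by (rule conv_sum[OF A B, where F = "\<lambda>u v. sc (f u) * sc (g v) * H (u @ v)"]) auto
  finally show ?thesis .
qed



definition ss :: "'k::field poly gauss" where "ss = Gs [:0, 1:] 0"
definition ii :: "'k::field poly gauss" where "ii = Gs 0 1"

fun pv :: "gen \<Rightarrow> 'k::field poly gauss" where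
  "pv X1 = ss" | "pv X2 = ii * ss" | "pv _ = 0"
fun uv :: "gen \<Rightarrow> 'k::field poly gauss" where
  "uv X5 = 1" | "uv X6 = ii" | "uv _ = 0"

definition PW :: "gen list \<Rightarrow> 'k::field poly gauss" where "PW w = prod_list (map pv w)"
definition ut :: "gen list \<Rightarrow> 'k::field poly gauss" where
  "ut w = (if w = [] then 0 else PW (butlast w) * uv (last w))"
definition ut' :: "gen list \<Rightarrow> 'k::field poly gauss" where
  "ut' w = (if w = [] then 0 else uv (hd w) * PW (tl w))"

lemma PW_append: "PW (u @ v) = PW u * PW v" by (simp add: PW_def)

lemma ut_append: "ut (u @ v) = PW u * ut v + (if v = [] then ut u else 0)"
  by (auto simp: ut_def PW_append butlast_append)

lemma ut'_append: "ut' (u @ v) = ut' u * PW v + (if u = [] then ut' v else 0)"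
  by (cases u) (auto simp: ut'_def PW_def)

lemma sum_if_nil: "finite B \<Longrightarrow> (\<forall>v. v \<notin> B \<longrightarrow> g v = 0) \<Longrightarrow>
    (\<Sum>v\<in>B. sc (g v) * (if v = [] then c else 0)) = sc (g []) * c"
  by (cases "[] \<in> B") (auto simp: if_distrib cong: if_cong)

lemma sum_if_nil1: "finite {w. g w \<noteq> 0} \<Longrightarrow>
    (\<Sum>v\<in>{w. g w \<noteq> 0}. sc (g v) * (if v = [] then 1 else 0)) = sc (g [])"
  by (rule trans[OF sum_if_nil[of "{w. g w \<noteq> 0}" g 1]]) simp_all

lemma tau_mult:
  assumes f: "f \<in> fa_carrier" and g: "g \<in> fa_carrier"
  shows "lin PW (fa_mult f g) = lin PW f * lin PW g"
proof -
  let ?A = "{w. f w \<noteq> 0}" and ?B = "{w. g w \<noteq> 0}"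
  have "lin PW (fa_mult f g) = (\<Sum>u\<in>?A. \<Sum>v\<in>?B. sc (f u) * sc (g v) * PW (u @ v))"
    by (rule lin_mult[OF f g])
  also have "\<dots> = (\<Sum>u\<in>?A. \<Sum>v\<in>?B. (sc (f u) * PW u) * (sc (g v) * PW v))"
    by (simp add: PW_append algebra_simps)
  also have "\<dots> = lin PW f * lin PW g"
    by (simp only: lin_def sum_product)
  finally show ?thesis .
qed

lemma mu_mult:
  assumes f: "f \<in> fa_carrier" and g: "g \<in> fa_carrier"
  shows "lin ut (fa_mult f g) = lin PW f * lin ut g + sc (g []) * lin ut f"
proof -
  let ?A = "{w. f w \<noteq> 0}" and ?B = "{w. g w \<noteq> 0}"
  have B: "finite ?B" using g by (simp add: fa_carrier_iff)
  have "lin ut (fa_mult f g) = (\<Sum>u\<in>?A. \<Sum>v\<in>?B. sc (f u) * sc (g v) * ut (u @ v))"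
    by (rule lin_mult[OF f g])
  also have "\<dots> = (\<Sum>u\<in>?A. \<Sum>v\<in>?B. (sc (f u) * PW u) * (sc (g v) * ut v)
        + (sc (f u) * ut u) * (sc (g v) * (if v = [] then 1 else 0)))"
    by (auto simp: ut_append algebra_simps intro!: sum.cong)
  also have "\<dots> = (\<Sum>u\<in>?A. \<Sum>v\<in>?B. (sc (f u) * PW u) * (sc (g v) * ut v))
        + (\<Sum>u\<in>?A. (sc (f u) * ut u) * (\<Sum>v\<in>?B. sc (g v) * (if v = [] then 1 else 0)))"
    by (simp add: sum.distrib sum_distrib_left)
  also have "\<dots> = lin PW f * lin ut g + (\<Sum>u\<in>?A. (sc (f u) * ut u) * sc (g []))"
    by (simp only: sum_if_nil1[OF B] lin_def sum_product)
  also have "\<dots> = lin PW f * lin ut g + sc (g []) * lin ut f"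
    by (simp add: lin_def sum_distrib_left algebra_simps)
  finally show ?thesis .
qed

lemma mu'_mult:
  assumes f: "f \<in> fa_carrier" and g: "g \<in> fa_carrier"
  shows "lin ut' (fa_mult f g) = lin ut' f * lin PW g + sc (f []) * lin ut' g"
proof -
  let ?A = "{w. f w \<noteq> 0}" and ?B = "{w. g w \<noteq> 0}"
  have A: "finite ?A" using f by (simp add: fa_carrier_iff)
  have "lin ut' (fa_mult f g) = (\<Sum>u\<in>?A. \<Sum>v\<in>?B. sc (f u) * sc (g v) * ut' (u @ v))"
    by (rule lin_mult[OF f g])
  also have "\<dots> = (\<Sum>u\<in>?A. \<Sum>v\<in>?B. (sc (f u) * ut' u) * (sc (g v) * PW v)
        + (sc (g v) * ut' v) * (sc (f u) * (if u = [] then 1 else 0)))"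
    by (auto simp: ut'_append algebra_simps intro!: sum.cong)
  also have "\<dots> = (\<Sum>u\<in>?A. \<Sum>v\<in>?B. (sc (f u) * ut' u) * (sc (g v) * PW v))
        + (\<Sum>v\<in>?B. (sc (g v) * ut' v) * (\<Sum>u\<in>?A. sc (f u) * (if u = [] then 1 else 0)))"
    by (simp add: sum.distrib sum_distrib_left sum.swap[of _ ?A])
  also have "\<dots> = lin ut' f * lin PW g + (\<Sum>v\<in>?B. (sc (g v) * ut' v) * sc (f []))"
    by (simp only: sum_if_nil1[OF A] lin_def sum_product)
  also have "\<dots> = lin ut' f * lin PW g + sc (f []) * lin ut' g"
    by (simp add: lin_def sum_distrib_left algebra_simps)
  finally show ?thesis .
qed



lemma fa_neg_closed: "f \<in> fa_carrier \<Longrightarrow> (\<lambda>w. - f w) \<in> fa_carrier"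
  by (simp add: fa_carrier_iff)

lemma fa_diff_closed: "f \<in> fa_carrier \<Longrightarrow> g \<in> fa_carrier \<Longrightarrow> (\<lambda>w. f w - g w) \<in> fa_carrier"
  using fa_add_closed[OF _ fa_neg_closed, of f g] by simp

lemma fa_a_inv: "f \<in> carrier free_alg \<Longrightarrow> \<ominus>\<^bsub>(free_alg :: (gen list \<Rightarrow> 'k::field) ring)\<^esub> f = (\<lambda>w. - f w)"
proof -
  interpret R: ring "free_alg :: (gen list \<Rightarrow> 'k::field) ring" by (rule ring_free_alg)
  assume f: "f \<in> carrier free_alg"
  show ?thesis
    by (rule R.minus_equality) (use f in \<open>auto simp: free_alg_def fa_neg_closed\<close>)
qed

lemma fa_subgroupI:
  assumes sub: "S \<subseteq> fa_carrier" and z: "(\<lambda>w. 0) \<in> S"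
    and add: "\<And>f g. f \<in> S \<Longrightarrow> g \<in> S \<Longrightarrow> (\<lambda>w. f w + g w) \<in> S"
    and neg: "\<And>f. f \<in> S \<Longrightarrow> (\<lambda>w. - f w) \<in> S"
  shows "subgroup S (add_monoid (free_alg :: (gen list \<Rightarrow> 'k::field) ring))"
proof -
  interpret R: ring "free_alg :: (gen list \<Rightarrow> 'k::field) ring" by (rule ring_free_alg)
  show ?thesis
    apply (rule R.add.subgroupI)
    subgoal using sub by (auto simp: free_alg_def)
    subgoal using z by auto
    subgoal for a using neg[of a] fa_a_inv[of a] sub by (auto simp: a_inv_def free_alg_def)
    subgoal for a b using add[of a b] by (simp add: free_alg_def)
    done
qed

lemma gx_carrier: "gx a \<in> fa_carrier"
  unfolding fa_carrier_iff gx_def by (rule finite_subset[of _ "{[a]}"]) auto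

lemma lin_gx: "lin H (gx a) = H [a]"
proof -
  have "lin H (gx a) = (\<Sum>w\<in>{[a]}. sc (gx a w) * H w)"
    by (rule lin_superset) (auto simp: gx_def)
  then show ?thesis by (simp add: gx_def)
qed

lemma gx_nil [simp]: "gx a [] = 0" by (simp add: gx_def)

lemma fa_mult_nil [simp]: "fa_mult f g [] = f [] * g []" by (simp add: fa_mult_def)

lemma PW_single [simp]: "PW [a] = pv a" by (simp add: PW_def)
lemma ut_single [simp]: "ut [a] = uv a" by (simp add: ut_def PW_def)
lemma ut'_single [simp]: "ut' [a] = uv a" by (simp add: ut'_def PW_def)

lemma comm_carrier: "comm a b \<in> fa_carrier"
  unfolding comm_def by (intro fa_diff_closed fa_mult_closed gx_carrier)

lemma lin_comm: "lin H (comm a b) = lin H (fa_mult (gx a) (gx b)) - lin H (fa_mult (gx b) (gx a))"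
  unfolding comm_def by (intro lin_diff fa_mult_closed gx_carrier)

lemma tau_comm: "lin PW (comm a b) = 0"
  unfolding lin_comm by (simp add: tau_mult gx_carrier lin_gx)

lemma mu_comm: "lin ut (comm a b) = pv a * uv b - pv b * uv a"
  unfolding lin_comm by (simp add: mu_mult gx_carrier lin_gx)

lemma mu'_comm: "lin ut' (comm a b) = uv a * pv b - uv b * pv a"
  unfolding lin_comm by (simp add: mu'_mult gx_carrier lin_gx)

lemma comm_nil [simp]: "comm a b [] = 0" by (simp add: comm_def)

lemma csum3_carrier: "f \<in> fa_carrier \<Longrightarrow> g \<in> fa_carrier \<Longrightarrow> h \<in> fa_carrier \<Longrightarrow> csum3 f g h \<in> fa_carrier"
  unfolding csum3_def using fa_add_closed[OF fa_add_closed] by blast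

lemma lin_csum3: "f \<in> fa_carrier \<Longrightarrow> g \<in> fa_carrier \<Longrightarrow> h \<in> fa_carrier \<Longrightarrow>
   lin H (csum3 f g h) = lin H f + lin H g + lin H h"
  unfolding csum3_def by (simp add: lin_add fa_add_closed)

lemma lin_csum3_comm: "lin H (csum3 (comm a b) (comm c d) (comm e f)) =
    lin H (comm a b) + lin H (comm c d) + lin H (comm e f)"
  by (simp add: lin_csum3 comm_carrier)

lemma csum3_nil [simp]: "csum3 f g h [] = f [] + g [] + h []" by (simp add: csum3_def)

lemma ss_ii: "ii * ii = (- 1 :: 'k::field poly gauss)"
  by (simp add: ii_def gauss_eq_iff)

definition Kid :: "(gen list \<Rightarrow> 'k::field) set" where
  "Kid = {f \<in> fa_carrier. lin PW f = 0 \<and> lin ut f = 0 \<and> lin ut' f = 0 \<and> f [] = 0}"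

lemma relations_Kid: "relations \<subseteq> (Kid :: (gen list \<Rightarrow> 'k::field) set)"
proof -
  have ii2: "ii * (ii * x) = - (x :: 'k poly gauss)" for x
    by (simp add: mult.assoc[symmetric] ss_ii)
  show ?thesis
    unfolding relations_def Kid_def
    by (simp add: csum3_carrier comm_carrier lin_csum3_comm tau_comm mu_comm mu'_comm
        algebra_simps ii2)
qed



lemma fa_mult_free [simp]: "monoid.mult free_alg = fa_mult" by (simp add: free_alg_def)
lemma fa_carrier_free [simp]: "partial_object.carrier free_alg = fa_carrier" by (simp add: free_alg_def)

lemma fa_zero_carrier [simp]: "(\<lambda>w. 0) \<in> fa_carrier" by (simp add: fa_carrier_iff)

lemma Kid_sub: "Kid \<subseteq> fa_carrier" by (auto simp: Kid_def)

lemma Kid_ideal: "ideal (Kid :: (gen list \<Rightarrow> 'k::field) set) free_alg"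
proof (rule idealI[OF ring_free_alg])
  show "subgroup (Kid :: (gen list \<Rightarrow> 'k::field) set) (add_monoid free_alg)"
    apply (rule fa_subgroupI)
    subgoal by (rule Kid_sub)
    subgoal by (simp add: Kid_def fa_carrier_iff)
    subgoal by (simp add: Kid_def fa_add_closed lin_add)
    subgoal by (simp add: Kid_def fa_neg_closed lin_neg)
    done
  fix a x :: "gen list \<Rightarrow> 'k" assume a: "a \<in> Kid" and x: "x \<in> carrier free_alg"
  have ac: "a \<in> fa_carrier" using a by (simp add: Kid_def)
  have xc: "x \<in> fa_carrier" using x by simp
  show "x \<otimes>\<^bsub>free_alg\<^esub> a \<in> Kid"
    using a by (simp add: Kid_def fa_mult_closed[OF xc ac] tau_mult[OF xc ac] mu_mult[OF xc ac] mu'_mult[OF xc ac])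
  show "a \<otimes>\<^bsub>free_alg\<^esub> x \<in> Kid"
    using a by (simp add: Kid_def fa_mult_closed[OF ac xc] tau_mult[OF ac xc] mu_mult[OF ac xc] mu'_mult[OF ac xc])
qed

abbreviation Iid :: "(gen list \<Rightarrow> 'k::field) set" where
  "Iid \<equiv> genideal free_alg relations"

lemma Iid_ideal: "ideal (Iid :: (gen list \<Rightarrow> 'k::field) set) free_alg"
  by (rule ring.genideal_ideal[OF ring_free_alg]) (use relations_Kid Kid_sub in auto)

lemma Iid_Kid: "(Iid :: (gen list \<Rightarrow> 'k::field) set) \<subseteq> Kid"
  by (rule ring.genideal_minimal[OF ring_free_alg Kid_ideal relations_Kid])

definition gdeg :: "'k::field poly gauss \<Rightarrow> nat" where
  "gdeg x = max (degree (re x)) (degree (im x))"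

lemma gdeg_add: "gdeg (x + y) \<le> max (gdeg x) (gdeg y)"
proof -
  have a: "degree (re x + re y) \<le> max (degree (re x)) (degree (re y))" by (rule degree_add_le_max)
  have b: "degree (im x + im y) \<le> max (degree (im x)) (degree (im y))" by (rule degree_add_le_max)
  show ?thesis using a b unfolding gdeg_def gauss_simps max_def by (auto split: if_splits)
qed

lemma gdeg_neg [simp]: "gdeg (- x) = gdeg x" by (simp add: gdeg_def)
lemma gdeg_zero [simp]: "gdeg 0 = 0" by (simp add: gdeg_def)

lemma gdeg_sc: "gdeg (sc c * x) \<le> gdeg x"
  by (simp add: gdeg_def sc_def degree_mult_le)

definition Jset :: "(gen list \<Rightarrow> 'k::field poly gauss) \<Rightarrow> nat \<Rightarrow> (gen list \<Rightarrow> 'k) set" where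
  "Jset H n = {f \<in> fa_carrier. lin PW f = 0 \<and> f [] = 0 \<and> gdeg (lin H f) \<le> n}"

lemma Jset_subgroup: "subgroup (Jset H n) (add_monoid free_alg)"
proof (rule fa_subgroupI)
  fix f g assume f: "f \<in> Jset H n" and g: "g \<in> Jset H n"
  show "(\<lambda>w. f w + g w) \<in> Jset H n"
    using f g gdeg_add[of "lin H f" "lin H g"]
    by (auto simp: Jset_def fa_add_closed lin_add)
qed (auto simp: Jset_def fa_neg_closed lin_neg)

lemma Kid_Jset_ut: "Kid \<subseteq> Jset ut n" by (auto simp: Kid_def Jset_def)
lemma Kid_Jset_ut': "Kid \<subseteq> Jset ut' n" by (auto simp: Kid_def Jset_def)

lemma Jset_mono: "Jset H n \<subseteq> Jset H (Suc n)" by (auto simp: Jset_def)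

lemma Jset_right:
  assumes f: "f \<in> Jset ut n" and x: "x \<in> fa_carrier"
  shows "fa_mult f x \<in> Jset ut n"
proof -
  have fc: "f \<in> fa_carrier" and t: "lin PW f = 0" and e: "f [] = 0" and d: "gdeg (lin ut f) \<le> n"
    using f by (auto simp: Jset_def)
  have "lin ut (fa_mult f x) = sc (x []) * lin ut f" by (simp add: mu_mult[OF fc x] t)
  then have "gdeg (lin ut (fa_mult f x)) \<le> n" using gdeg_sc[of "x []" "lin ut f"] d by simp
  then show ?thesis using fa_mult_closed[OF fc x] tau_mult[OF fc x] t e by (simp add: Jset_def)
qed

lemma Jset_left:
  assumes f: "f \<in> Jset ut' n" and x: "x \<in> fa_carrier"
  shows "fa_mult x f \<in> Jset ut' n"
proof -
  have fc: "f \<in> fa_carrier" and t: "lin PW f = 0" and e: "f [] = 0" and d: "gdeg (lin ut' f) \<le> n"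
    using f by (auto simp: Jset_def)
  have "lin ut' (fa_mult x f) = sc (x []) * lin ut' f" by (simp add: mu'_mult[OF x fc] t)
  then have "gdeg (lin ut' (fa_mult x f)) \<le> n" using gdeg_sc[of "x []" "lin ut' f"] d by simp
  then show ?thesis using fa_mult_closed[OF x fc] tau_mult[OF x fc] t e by (simp add: Jset_def)
qed

lemma Jset_shift:
  assumes hH: "\<And>h. h \<in> Kid \<Longrightarrow> lin H h = 0"
    and h: "h \<in> Kid" and g: "g \<in> Jset H n"
  shows "(\<lambda>w. h w + g w) \<in> Jset H n"
proof -
  have hc: "h \<in> fa_carrier" and gc: "g \<in> fa_carrier" using h g by (auto simp: Kid_def Jset_def)
  show ?thesis using h g hH[OF h]
    by (auto simp: Jset_def Kid_def lin_add[OF hc gc] fa_add_closed[OF hc gc])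
qed


primrec wr :: "nat \<Rightarrow> gen list \<Rightarrow> 'k::field" where
  "wr 0 = comm X1 X5" | "wr (Suc m) = fa_mult (gx X1) (wr m)"
primrec wl :: "nat \<Rightarrow> gen list \<Rightarrow> 'k::field" where
  "wl 0 = comm X1 X5" | "wl (Suc m) = fa_mult (wl m) (gx X1)"

lemma wr_props: "(wr m :: gen list \<Rightarrow> 'k::field) \<in> fa_carrier \<and> lin PW (wr m :: gen list \<Rightarrow> 'k) = 0 \<and> (wr m :: gen list \<Rightarrow> 'k) [] = 0 \<and> lin ut (wr m :: gen list \<Rightarrow> 'k) = ss ^ Suc m"
proof (induction m)
  case 0 then show ?case by (simp add: comm_carrier tau_comm mu_comm)
next
  case (Suc m)
  then have c: "(wr m :: gen list \<Rightarrow> 'k) \<in> fa_carrier" and t: "lin PW (wr m :: gen list \<Rightarrow> 'k) = 0" and e: "(wr m :: gen list \<Rightarrow> 'k) [] = 0"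
    and u: "lin ut (wr m :: gen list \<Rightarrow> 'k) = ss ^ Suc m" by auto
  show ?case
    using tau_mult[OF gx_carrier c, of X1] mu_mult[OF gx_carrier c, of X1]
      fa_mult_closed[OF gx_carrier c, of X1]
    by (simp add: t e u lin_gx)
qed

lemma wl_props: "(wl m :: gen list \<Rightarrow> 'k::field) \<in> fa_carrier \<and> lin PW (wl m :: gen list \<Rightarrow> 'k) = 0 \<and> (wl m :: gen list \<Rightarrow> 'k) [] = 0 \<and> lin ut' (wl m :: gen list \<Rightarrow> 'k) = - (ss ^ Suc m)"
proof (induction m)
  case 0 then show ?case by (simp add: comm_carrier tau_comm mu'_comm)
next
  case (Suc m)
  then have c: "(wl m :: gen list \<Rightarrow> 'k) \<in> fa_carrier" and t: "lin PW (wl m :: gen list \<Rightarrow> 'k) = 0" and e: "(wl m :: gen list \<Rightarrow> 'k) [] = 0"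
    and u: "lin ut' (wl m :: gen list \<Rightarrow> 'k) = - (ss ^ Suc m)" by auto
  show ?case
    using tau_mult[OF c gx_carrier, of X1] mu'_mult[OF c gx_carrier, of X1]
      fa_mult_closed[OF c gx_carrier, of X1]
    by (simp add: t e u lin_gx power_Suc2[of _ "Suc m"] del: power_Suc)
qed

lemma ss_pow: "(ss :: 'k::field poly gauss) ^ n = Gs (monom 1 n) 0"
proof (induction n)
  case 0 then show ?case by (simp add: gauss_eq_iff)
next
  case (Suc n)
  have "[:0, 1:] * monom 1 n = (monom 1 (Suc n) :: 'k poly)" by (simp add: monom_Suc)
  then show ?case using Suc by (simp add: ss_def gauss_eq_iff)
qed

lemma gdeg_ss_pow: "gdeg ((ss :: 'k::field poly gauss) ^ n) = n"
  by (simp add: ss_pow gdeg_def degree_monom_eq)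

lemma wr_in: "(wr m :: gen list \<Rightarrow> 'k::field) \<in> Jset ut (Suc m)" and wr_notin: "(wr m :: gen list \<Rightarrow> 'k::field) \<notin> Jset ut m"
proof -
  have p: "(wr m :: gen list \<Rightarrow> 'k::field) \<in> fa_carrier \<and> lin PW (wr m :: gen list \<Rightarrow> 'k) = 0 \<and>
     (wr m :: gen list \<Rightarrow> 'k) [] = 0 \<and> lin ut (wr m :: gen list \<Rightarrow> 'k) = ss ^ Suc m"
    by (rule wr_props)
  have g: "gdeg (lin ut (wr m :: gen list \<Rightarrow> 'k)) = Suc m"
    using p gdeg_ss_pow[of "Suc m", where 'k='k] by simp
  show "(wr m :: gen list \<Rightarrow> 'k::field) \<in> Jset ut (Suc m)" using p g by (simp add: Jset_def)
  show "(wr m :: gen list \<Rightarrow> 'k::field) \<notin> Jset ut m" using p g by (simp add: Jset_def)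
qed

lemma wl_in: "(wl m :: gen list \<Rightarrow> 'k::field) \<in> Jset ut' (Suc m)" and wl_notin: "(wl m :: gen list \<Rightarrow> 'k::field) \<notin> Jset ut' m"
proof -
  have p: "(wl m :: gen list \<Rightarrow> 'k::field) \<in> fa_carrier \<and> lin PW (wl m :: gen list \<Rightarrow> 'k) = 0 \<and>
     (wl m :: gen list \<Rightarrow> 'k) [] = 0 \<and> lin ut' (wl m :: gen list \<Rightarrow> 'k) = - (ss ^ Suc m)"
    by (rule wl_props)
  have g: "gdeg (lin ut' (wl m :: gen list \<Rightarrow> 'k)) = Suc m"
    using p gdeg_ss_pow[of "Suc m", where 'k='k] by (simp del: power_Suc)
  show "(wl m :: gen list \<Rightarrow> 'k::field) \<in> Jset ut' (Suc m)" using p g by (simp add: Jset_def)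
  show "(wl m :: gen list \<Rightarrow> 'k::field) \<notin> Jset ut' m" using p g by (simp add: Jset_def)
qed



abbreviation qpi :: "(gen list \<Rightarrow> 'k::field) \<Rightarrow> (gen list \<Rightarrow> 'k) set" where
  "qpi f \<equiv> Iid +>\<^bsub>free_alg\<^esub> f"

lemma A_alg_eq: "(A_alg :: (gen list \<Rightarrow> 'k::field) set ring) = free_alg Quot Iid"
  by (simp add: A_alg_def)

lemma A_carrier: "carrier (A_alg :: (gen list \<Rightarrow> 'k::field) set ring) = qpi ` fa_carrier"
proof -
  have "carrier (A_alg :: (gen list \<Rightarrow> 'k::field) set ring) = a_rcosets\<^bsub>free_alg\<^esub> Iid"
    by (simp add: A_alg_def FactRing_def)
  also have "\<dots> = (\<Union>a\<in>carrier free_alg. {Iid +>\<^bsub>free_alg\<^esub> a})"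
    by (rule A_RCOSETS_def'[THEN meta_eq_to_obj_eq])
  also have "\<dots> = qpi ` fa_carrier"
    by (simp only: fa_carrier_free UNION_singleton_eq_range)
  finally show ?thesis .
qed

lemma pi_hom: "qpi \<in> ring_hom (free_alg :: (gen list \<Rightarrow> 'k::field) ring) A_alg"
  unfolding A_alg_eq by (rule ideal.rcos_ring_hom[OF Iid_ideal])

lemma pi_hom_ring: "ring_hom_ring (free_alg :: (gen list \<Rightarrow> 'k::field) ring) A_alg qpi"
  unfolding A_alg_eq by (rule ideal.rcos_ring_hom_ring[OF Iid_ideal])

lemma coset_mem:
  assumes hH: "\<And>h. h \<in> Kid \<Longrightarrow> lin H h = 0"
    and f: "(f :: gen list \<Rightarrow> 'k::field) \<in> fa_carrier" and g: "g \<in> Jset H n"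
    and eq: "qpi f = qpi g"
  shows "f \<in> Jset H n"
proof -
  have z: "\<zero>\<^bsub>free_alg\<^esub> \<in> (Iid :: (gen list \<Rightarrow> 'k::field) set)"
    by (rule additive_subgroup.zero_closed[OF ideal.axioms(1)[OF Iid_ideal]])
  have e0: "\<zero>\<^bsub>free_alg\<^esub> \<oplus>\<^bsub>free_alg\<^esub> f = f" by (simp add: free_alg_def)
  have "f \<in> (\<Union>h\<in>(Iid :: (gen list \<Rightarrow> 'k::field) set). {h \<oplus>\<^bsub>free_alg\<^esub> f})"
  proof (rule UN_I[OF z])
    show "f \<in> {\<zero>\<^bsub>free_alg\<^esub> \<oplus>\<^bsub>free_alg\<^esub> f}" by (simp only: e0 singleton_iff)
  qed
  then have "f \<in> qpi f" by (simp only: a_r_coset_def')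
  then have "f \<in> qpi g" by (simp only: eq)
  then have "f \<in> (\<Union>h\<in>(Iid :: (gen list \<Rightarrow> 'k::field) set). {h \<oplus>\<^bsub>free_alg\<^esub> g})"
    by (simp only: a_r_coset_def')
  then obtain h where h1: "h \<in> Iid" and h2: "f = h \<oplus>\<^bsub>free_alg\<^esub> g" by blast
  then have fe: "f = (\<lambda>w. h w + g w)" by (simp add: free_alg_def)
  have hK: "h \<in> Kid" using Iid_Kid h1 by blast
  show ?thesis using Jset_shift[of H h g n, OF hH hK g] fe by simp
qed

lemma img_subgroup: "additive_subgroup (qpi ` Jset H n) (A_alg :: (gen list \<Rightarrow> 'k::field) set ring)"
  by (rule additive_subgroupI[OF ring_hom_ring.img_is_add_subgroup[OF pi_hom_ring Jset_subgroup]])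

lemma right_img: "right_ideal (qpi ` Jset ut n) (A_alg :: (gen list \<Rightarrow> 'k::field) set ring)"
  unfolding right_ideal_def
proof (intro conjI ballI)
  show "additive_subgroup (qpi ` Jset ut n) (A_alg :: (gen list \<Rightarrow> 'k::field) set ring)"
    by (rule img_subgroup)
  fix a x :: "(gen list \<Rightarrow> 'k) set" assume a: "a \<in> carrier (A_alg :: (gen list \<Rightarrow> 'k::field) set ring)" and x: "x \<in> qpi ` Jset ut n"
  have a': "a \<in> qpi ` fa_carrier" using a by (simp only: A_carrier)
  obtain g where g2: "a = qpi g" and g1: "g \<in> fa_carrier" using a' by (rule imageE)
  obtain f where f2: "x = qpi f" and f1: "f \<in> Jset ut n" using x by (rule imageE)
  have fc: "f \<in> fa_carrier" using f1 by (simp add: Jset_def)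
  have "x \<otimes>\<^bsub>A_alg\<^esub> a = qpi f \<otimes>\<^bsub>A_alg\<^esub> qpi g" by (simp only: f2 g2)
  also have "\<dots> = qpi (f \<otimes>\<^bsub>free_alg\<^esub> g)" by (rule ring_hom_mult[OF pi_hom fc[folded fa_carrier_free] g1[folded fa_carrier_free], symmetric])
  also have "\<dots> = qpi (fa_mult f g)" by (simp only: fa_mult_free)
  finally have e: "x \<otimes>\<^bsub>A_alg\<^esub> a = qpi (fa_mult f g)" .
  show "x \<otimes>\<^bsub>A_alg\<^esub> a \<in> qpi ` Jset ut n"
    unfolding e by (rule imageI[OF Jset_right[OF f1 g1]])
qed

lemma left_img: "left_ideal (qpi ` Jset ut' n) (A_alg :: (gen list \<Rightarrow> 'k::field) set ring)"
  unfolding left_ideal_def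
proof (intro conjI ballI)
  show "additive_subgroup (qpi ` Jset ut' n) (A_alg :: (gen list \<Rightarrow> 'k::field) set ring)"
    by (rule img_subgroup)
  fix a x :: "(gen list \<Rightarrow> 'k) set" assume a: "a \<in> carrier (A_alg :: (gen list \<Rightarrow> 'k::field) set ring)" and x: "x \<in> qpi ` Jset ut' n"
  have a': "a \<in> qpi ` fa_carrier" using a by (simp only: A_carrier)
  obtain g where g2: "a = qpi g" and g1: "g \<in> fa_carrier" using a' by (rule imageE)
  obtain f where f2: "x = qpi f" and f1: "f \<in> Jset ut' n" using x by (rule imageE)
  have fc: "f \<in> fa_carrier" using f1 by (simp add: Jset_def)
  have "a \<otimes>\<^bsub>A_alg\<^esub> x = qpi g \<otimes>\<^bsub>A_alg\<^esub> qpi f" by (simp only: f2 g2)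
  also have "\<dots> = qpi (g \<otimes>\<^bsub>free_alg\<^esub> f)" by (rule ring_hom_mult[OF pi_hom g1[folded fa_carrier_free] fc[folded fa_carrier_free], symmetric])
  also have "\<dots> = qpi (fa_mult g f)" by (simp only: fa_mult_free)
  finally have e: "a \<otimes>\<^bsub>A_alg\<^esub> x = qpi (fa_mult g f)" .
  show "a \<otimes>\<^bsub>A_alg\<^esub> x \<in> qpi ` Jset ut' n"
    unfolding e by (rule imageI[OF Jset_left[OF f1 g1]])
qed

lemma Kid_ut: "h \<in> Kid \<Longrightarrow> lin ut h = 0" by (simp add: Kid_def)
lemma Kid_ut': "h \<in> Kid \<Longrightarrow> lin ut' h = 0" by (simp add: Kid_def)

lemma not_noeth_generic:
  assumes ch: "\<forall>n. P (J n) \<and> J n \<subseteq> J (Suc n)" and st: "\<And>N. J (Suc N) \<noteq> J N"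
  shows "\<not> (\<forall>J. (\<forall>n. P (J n) \<and> J n \<subseteq> J (Suc n)) \<longrightarrow> (\<exists>N. \<forall>n\<ge>N. J n = J N))"
proof
  assume H: "\<forall>J. (\<forall>n. P (J n) \<and> J n \<subseteq> J (Suc n)) \<longrightarrow> (\<exists>N. \<forall>n\<ge>N. J n = J N)"
  have "\<exists>N. \<forall>n\<ge>N. J n = J N" using H ch by blast
  then obtain N where "\<forall>n\<ge>N. J n = J N" by blast
  then have "N \<le> Suc N \<longrightarrow> J (Suc N) = J N" by (rule spec)
  then have "J (Suc N) = J N" by (simp only: le_SucI order_refl simp_thms)
  with st show False by blast
qed

lemma right_strict: "qpi ` Jset ut (Suc N) \<noteq> qpi ` (Jset ut N :: (gen list \<Rightarrow> 'k::field) set)"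
proof
  assume eqN: "qpi ` Jset ut (Suc N) = qpi ` (Jset ut N :: (gen list \<Rightarrow> 'k::field) set)"
  have "qpi (wr N :: gen list \<Rightarrow> 'k) \<in> qpi ` Jset ut N"
    unfolding eqN[symmetric] by (rule imageI[OF wr_in])
  then obtain g where g2: "qpi (wr N :: gen list \<Rightarrow> 'k) = qpi g" and g1: "g \<in> Jset ut N"
    by (rule imageE)
  have "(wr N :: gen list \<Rightarrow> 'k) \<in> Jset ut N"
    by (rule coset_mem[OF Kid_ut conjunct1[OF wr_props] g1 g2])
  with wr_notin show False by blast
qed

lemma left_strict: "qpi ` Jset ut' (Suc N) \<noteq> qpi ` (Jset ut' N :: (gen list \<Rightarrow> 'k::field) set)"
proof
  assume eqN: "qpi ` Jset ut' (Suc N) = qpi ` (Jset ut' N :: (gen list \<Rightarrow> 'k::field) set)"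
  have "qpi (wl N :: gen list \<Rightarrow> 'k) \<in> qpi ` Jset ut' N"
    unfolding eqN[symmetric] by (rule imageI[OF wl_in])
  then obtain g where g2: "qpi (wl N :: gen list \<Rightarrow> 'k) = qpi g" and g1: "g \<in> Jset ut' N"
    by (rule imageE)
  have "(wl N :: gen list \<Rightarrow> 'k) \<in> Jset ut' N"
    by (rule coset_mem[OF Kid_ut' conjunct1[OF wl_props] g1 g2])
  with wl_notin show False by blast
qed

lemma right_chain: "\<forall>n. right_ideal (qpi ` Jset ut n) (A_alg :: (gen list \<Rightarrow> 'k::field) set ring) \<and>
      qpi ` Jset ut n \<subseteq> qpi ` (Jset ut (Suc n) :: (gen list \<Rightarrow> 'k) set)"
proof
  fix n
  show "right_ideal (qpi ` Jset ut n) (A_alg :: (gen list \<Rightarrow> 'k::field) set ring) \<and>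
      qpi ` Jset ut n \<subseteq> qpi ` (Jset ut (Suc n) :: (gen list \<Rightarrow> 'k) set)"
    by (rule conjI[OF right_img image_mono[OF Jset_mono]])
qed

lemma left_chain: "\<forall>n. left_ideal (qpi ` Jset ut' n) (A_alg :: (gen list \<Rightarrow> 'k::field) set ring) \<and>
      qpi ` Jset ut' n \<subseteq> qpi ` (Jset ut' (Suc n) :: (gen list \<Rightarrow> 'k) set)"
proof
  fix n
  show "left_ideal (qpi ` Jset ut' n) (A_alg :: (gen list \<Rightarrow> 'k::field) set ring) \<and>
      qpi ` Jset ut' n \<subseteq> qpi ` (Jset ut' (Suc n) :: (gen list \<Rightarrow> 'k) set)"
    by (rule conjI[OF left_img image_mono[OF Jset_mono]])
qed

lemma not_right: "\<not> right_noetherian (A_alg :: (gen list \<Rightarrow> 'k::field) set ring)"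
  unfolding right_noetherian_def
  by (rule not_noeth_generic[where P = "\<lambda>X. right_ideal X (A_alg :: (gen list \<Rightarrow> 'k::field) set ring)"
        and J = "\<lambda>n. qpi ` (Jset ut n :: (gen list \<Rightarrow> 'k) set)", OF right_chain right_strict])

lemma not_left: "\<not> left_noetherian (A_alg :: (gen list \<Rightarrow> 'k::field) set ring)"
  unfolding left_noetherian_def
  by (rule not_noeth_generic[where P = "\<lambda>X. left_ideal X (A_alg :: (gen list \<Rightarrow> 'k::field) set ring)"
        and J = "\<lambda>n. qpi ` (Jset ut' n :: (gen list \<Rightarrow> 'k) set)", OF left_chain left_strict])

theorem corollary5p6:
  shows "\<not> left_noetherian (A_alg :: (gen list \<Rightarrow> 'k::field) set ring) \<and>
         \<not> right_noetherian (A_alg :: (gen list \<Rightarrow> 'k::field) set ring)"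
  using not_left not_right by blast

end
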